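(* Under the hypotheses of the fidelity statement (that is: $\mathbf{X}\in[0,1]^{m\times 2n}$ with $n$ $(key,value)$ column pairs, $\delta\in(0,1)$, $b\ge\lceil\log_2(mn/\delta)\rceil$, and $\mathbf{X}_w$ obtained by keeping $key$ columns and moving each $value$ entry into the nearest (in interval index) green interval among $I_j=[\tfrac{j-1}{b},\tfrac{j}{b}]$, each interval green independently with probability $\tfrac12$ for each entry), for every $p\ge 1$, with probability at least $1-\delta$, $$\mathcal{W}_p(F_{\mathbf{X}},F_{\mathbf{X}_w})\le \frac{\sqrt{2n}\,\lceil\log_2(mn/\delta)\rceil}{b}.$$
   Context: $F_{\mathbf{X}}$ (resp. $F_{\mathbf{X}_w}$) denotes the empirical distribution on $\mathbb{R}^{2n}$ placing mass $1/m$ on each row of $\mathbf{X}$ (resp. $\mathbf{X}_w$), and $\mathcal{W}_p$ is the $p$-Wasserstein distance with respect to the Euclidean norm on $\mathbb{R}^{2n}$. *)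

theory Defs
  imports "HOL-Probability.Probability"
begin

text \<open>Points of R^d are represented as real lists of length d; Euclidean distance.\<close>
definition euclid_dist :: "real list \<Rightarrow> real list \<Rightarrow> real" where
  "euclid_dist xs ys = sqrt (\<Sum>i<length xs. (xs ! i - ys ! i)^2)"

definition mat_row :: "nat \<Rightarrow> (nat \<Rightarrow> nat \<Rightarrow> real) \<Rightarrow> nat \<Rightarrow> real list" where
  "mat_row n X i = map (X i) [0..<2*n]"

definition emp_dist :: "nat \<Rightarrow> nat \<Rightarrow> (nat \<Rightarrow> nat \<Rightarrow> real) \<Rightarrow> real list pmf" where
  "emp_dist m n X = map_pmf (mat_row n X) (pmf_of_set {0..<m})"

definition couplings :: "'a pmf \<Rightarrow> 'a pmf \<Rightarrow> ('a \<times> 'a) pmf set" where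
  "couplings \<mu> \<nu> = {\<pi>. map_pmf fst \<pi> = \<mu> \<and> map_pmf snd \<pi> = \<nu>}"

definition wasserstein :: "real \<Rightarrow> real list pmf \<Rightarrow> real list pmf \<Rightarrow> real" where
  "wasserstein p \<mu> \<nu> =
     (INF \<pi>\<in>couplings \<mu> \<nu>. measure_pmf.expectation \<pi> (\<lambda>(x, y). euclid_dist x y powr p)) powr (1 / p)"

text \<open>Intervals I_j = [(j-1)/b, j/b], j = 1..b, and the index of the interval containing x
  (half-open convention [(j-1)/b, j/b), with x = 1 in I_b).\<close>
definition interval :: "nat \<Rightarrow> nat \<Rightarrow> real set" where
  "interval b j = {real (j - 1) / real b .. real j / real b}"

definition interval_index :: "nat \<Rightarrow> real \<Rightarrow> nat" where
  "interval_index b x = min b (nat \<lfloor>x * real b\<rfloor> + 1)"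

definition valid_move :: "nat \<Rightarrow> (real \<Rightarrow> nat set \<Rightarrow> real) \<Rightarrow> bool" where
  "valid_move b mv \<longleftrightarrow>
     (\<forall>x\<in>{0..1}. \<forall>G. G \<subseteq> {1..b} \<and> G \<noteq> {} \<longrightarrow>
        (\<exists>j\<in>G. mv x G \<in> interval b j \<and>
           (\<forall>j'\<in>G. \<bar>int j - int (interval_index b x)\<bar> \<le> \<bar>int j' - int (interval_index b x)\<bar>)))"

text \<open>Column 2k is the k-th key column, column 2k+1 the k-th value column.
  g (i,k,j) = interval j is green for the value entry of row i, pair k.\<close>
definition watermark :: "nat \<Rightarrow> (nat \<Rightarrow> nat \<Rightarrow> real \<Rightarrow> nat set \<Rightarrow> real) \<Rightarrow>
    (nat \<Rightarrow> nat \<Rightarrow> real) \<Rightarrow> (nat \<times> nat \<times> nat \<Rightarrow> bool) \<Rightarrow> nat \<Rightarrow> nat \<Rightarrow> real" where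
  "watermark b mv X g i c =
     (if even c then X i c
      else mv i (c div 2) (X i c) {j\<in>{1..b}. g (i, c div 2, j)})"

definition green_pmf :: "nat \<Rightarrow> nat \<Rightarrow> nat \<Rightarrow> (nat \<times> nat \<times> nat \<Rightarrow> bool) pmf" where
  "green_pmf m n b = Pi_pmf ({0..<m} \<times> {0..<n} \<times> {1..b}) False (\<lambda>_. bernoulli_pmf (1/2))"

end

theory Submission
  imports Defs
begin

lemma idx_props:
  assumes "0 \<le> x" "x \<le> 1" "0 < b"
  shows "1 \<le> interval_index b x" "interval_index b x \<le> b"
    "real (interval_index b x) - 1 \<le> x * real b" "x * real b \<le> real (interval_index b x)"
proof -
  have f0: "0 \<le> \<lfloor>x * real b\<rfloor>" using assms by simp
  have f1: "real_of_int \<lfloor>x * real b\<rfloor> \<le> x * real b" "x * real b < real_of_int \<lfloor>x * real b\<rfloor> + 1"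
    by linarith+
  have xb: "x * real b \<le> real b" using assms by (simp add: mult_left_le_one_le)
  show "1 \<le> interval_index b x" "interval_index b x \<le> b"
    using assms unfolding interval_index_def by auto
  have "real (interval_index b x) - 1 \<le> x * real b \<and> x * real b \<le> real (interval_index b x)"
  proof (cases "nat \<lfloor>x * real b\<rfloor> + 1 \<le> b")
    case True
    then have "interval_index b x = nat \<lfloor>x * real b\<rfloor> + 1" unfolding interval_index_def by simp
    moreover have "real (nat \<lfloor>x * real b\<rfloor>) = real_of_int \<lfloor>x * real b\<rfloor>" using f0 by simp
    ultimately have e: "real (interval_index b x) = real_of_int \<lfloor>x * real b\<rfloor> + 1" by simp
    show ?thesis using e f1 by linarith
  next
    case False
    then have e: "interval_index b x = b" unfolding interval_index_def by simp
    from False have "real b \<le> real_of_int \<lfloor>x * real b\<rfloor>" using f0 by linarith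
    then show ?thesis
      using e f1 xb by simp linarith
  qed
  then show "real (interval_index b x) - 1 \<le> x * real b" "x * real b \<le> real (interval_index b x)"
    by auto
qed

lemma interval_dist:
  assumes "y \<in> interval b j" "1 \<le> j" "1 \<le> i" "0 < b"
    "real i - 1 \<le> x * real b" "x * real b \<le> real i"
  shows "\<bar>y - x\<bar> \<le> (real_of_int \<bar>int j - int i\<bar> + 1) / real b"
proof -
  have "real (j - 1) = real j - 1" using assms by simp
  then have y: "(real j - 1) \<le> y * real b" "y * real b \<le> real j"
    using assms(1,4) unfolding interval_def by (auto simp: field_simps)
  have "\<bar>y * real b - x * real b\<bar> \<le> real_of_int \<bar>int j - int i\<bar> + 1"
    using y assms(5,6) by (auto simp: abs_if)
  then have "\<bar>y - x\<bar> * real b \<le> real_of_int \<bar>int j - int i\<bar> + 1"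
    by (simp add: abs_mult left_diff_distrib[symmetric])
  then show ?thesis using assms(4) by (simp add: field_simps)
qed

lemma wass_bound:
  assumes "0 < m" "1 \<le> p" "0 \<le> B"
    "\<forall>i<m. euclid_dist (mat_row n X i) (mat_row n Y i) \<le> B"
  shows "wasserstein p (emp_dist m n X) (emp_dist m n Y) \<le> B"
proof -
  define \<pi> where "\<pi> = map_pmf (\<lambda>i. (mat_row n X i, mat_row n Y i)) (pmf_of_set {0..<m})"
  define F where "F = (\<lambda>\<pi>. measure_pmf.expectation \<pi> (\<lambda>(x, y). euclid_dist x y powr p))"
  have cpl: "\<pi> \<in> couplings (emp_dist m n X) (emp_dist m n Y)"
    unfolding couplings_def \<pi>_def emp_dist_def by (simp add: pmf.map_comp o_def)
  have nn: "0 \<le> F \<sigma>" for \<sigma> unfolding F_def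
    by (rule Bochner_Integration.integral_nonneg) (auto simp: euclid_dist_def)
  have "F \<pi> = (\<Sum>i\<in>{0..<m}. euclid_dist (mat_row n X i) (mat_row n Y i) powr p) / real m"
    unfolding F_def \<pi>_def using assms(1) by (simp add: integral_pmf_of_set)
  also have "\<dots> \<le> (\<Sum>i\<in>{0..<m}. B powr p) / real m"
    apply (intro divide_right_mono sum_mono powr_mono2)
    using assms by (auto simp: euclid_dist_def intro: sum_nonneg)
  also have "\<dots> = B powr p" using assms(1) by simp
  finally have Fpi: "F \<pi> \<le> B powr p" .
  have bdd: "bdd_below (F ` couplings (emp_dist m n X) (emp_dist m n Y))"
    using nn by (intro bdd_belowI[where m=0]) auto
  have le: "(INF \<sigma>\<in>couplings (emp_dist m n X) (emp_dist m n Y). F \<sigma>) \<le> B powr p"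
    using cInf_lower[OF imageI[OF cpl] bdd] Fpi by linarith
  have ge: "0 \<le> (INF \<sigma>\<in>couplings (emp_dist m n X) (emp_dist m n Y). F \<sigma>)"
    using cpl nn by (intro cINF_greatest) auto
  have "wasserstein p (emp_dist m n X) (emp_dist m n Y) \<le> (B powr p) powr (1/p)"
    unfolding wasserstein_def F_def[symmetric]
    using le ge assms(2) by (intro powr_mono2) auto
  also have "\<dots> = B" using assms by (simp add: powr_powr)
  finally show ?thesis .
qed


theorem mainTheorem3:
  fixes m n b :: nat and \<delta> p :: real
    and X :: "nat \<Rightarrow> nat \<Rightarrow> real"
    and mv :: "nat \<Rightarrow> nat \<Rightarrow> real \<Rightarrow> nat set \<Rightarrow> real"
  assumes "0 < m" and "0 < n"
    and "\<forall>i<m. \<forall>c<2*n. 0 \<le> X i c \<and> X i c \<le> 1"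
    and "0 < \<delta>" and "\<delta> < 1"
    and "real b \<ge> real_of_int \<lceil>log 2 (real m * real n / \<delta>)\<rceil>"
    and "\<forall>i k. valid_move b (mv i k)"
    and "1 \<le> p"
  shows "measure_pmf.prob (green_pmf m n b)
           {g. wasserstein p (emp_dist m n X) (emp_dist m n (watermark b mv X g))
                 \<le> sqrt (2 * real n) * real_of_int \<lceil>log 2 (real m * real n / \<delta>)\<rceil> / real b}
         \<ge> 1 - \<delta>"
proof -
  note Xb = assms(3)
  define r where "r = real m * real n / \<delta>"
  have mn1: "1 \<le> real m * real n" using assms(1,2)
    by (metis One_nat_def Suc_leI nat_0_less_mult_iff of_nat_1 of_nat_le_iff of_nat_mult)
  have r1: "1 < r" unfolding r_def using assms(4,5) mn1 by (simp add: less_divide_eq)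
  define L where "L = nat \<lceil>log 2 r\<rceil>"
  have logpos: "0 < log 2 r" using r1 by simp
  have Lr: "real_of_int \<lceil>log 2 r\<rceil> = real L" unfolding L_def using logpos by simp
  have L1: "1 \<le> L" unfolding L_def using logpos by linarith
  have bL: "L \<le> b" using assms(6) Lr unfolding r_def by simp
  have b0: "0 < b" using L1 bL by simp
  have twoL: "r \<le> 2 ^ L"
  proof -
    have "r = 2 powr (log 2 r)" using r1 by simp
    also have "\<dots> \<le> 2 powr (real L)" using Lr by (intro powr_mono) linarith+
    also have "\<dots> = 2 ^ L" by (simp add: powr_realpow)
    finally show ?thesis .
  qed
  define idx where "idx = (\<lambda>i k. interval_index b (X i (2*k+1)))"
  have idx: "1 \<le> idx i k \<and> idx i k \<le> b \<and> real (idx i k) - 1 \<le> X i (2*k+1) * real b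
     \<and> X i (2*k+1) * real b \<le> real (idx i k)" if "i < m" "k < n" for i k
    using idx_props[of "X i (2*k+1)" b] Xb that b0 unfolding idx_def by auto
  define Good where "Good = {g. \<forall>i<m. \<forall>k<n. \<exists>j\<in>{1..b}. g (i,k,j) \<and>
      \<bar>int j - int (idx i k)\<bar> \<le> int L - 1}"
  define bound where "bound = sqrt (2 * real n) * real L / real b"
  have entry: "\<bar>watermark b mv X g i c - X i c\<bar> \<le> real L / real b"
    if g: "g \<in> Good" and i: "i < m" and c: "c < 2*n" for g i c
  proof (cases "even c")
    case True then show ?thesis by (simp add: watermark_def)
  next
    case False
    define k where "k = c div 2"
    have ck: "c = 2*k+1" using False unfolding k_def by simp
    have k: "k < n" using c ck by simp
    define G where "G = {j\<in>{1..b}. g (i, k, j)}"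
    obtain j1 where j1: "j1 \<in> {1..b}" "g (i,k,j1)" "\<bar>int j1 - int (idx i k)\<bar> \<le> int L - 1"
      using g i k unfolding Good_def by blast
    have G: "G \<subseteq> {1..b}" "G \<noteq> {}" using j1 unfolding G_def by auto
    have x01: "X i c \<in> {0..1}" using Xb i c by auto
    obtain j0 where j0: "j0 \<in> G" "mv i k (X i c) G \<in> interval b j0"
      "\<forall>j'\<in>G. \<bar>int j0 - int (interval_index b (X i c))\<bar> \<le> \<bar>int j' - int (interval_index b (X i c))\<bar>"
      using assms(7) x01 G unfolding valid_move_def by meson
    have j0L: "\<bar>int j0 - int (idx i k)\<bar> \<le> int L - 1"
      using j0(3) j1 unfolding G_def idx_def ck by force
    have "\<bar>mv i k (X i c) G - X i c\<bar> \<le> (real_of_int \<bar>int j0 - int (idx i k)\<bar> + 1) / real b"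
      apply (rule interval_dist[OF j0(2)])
      using j0(1) G_def idx[OF i k] b0 ck by auto
    also have "\<dots> \<le> real L / real b"
    proof -
      have "real_of_int \<bar>int j0 - int (idx i k)\<bar> + 1 \<le> real L"
        using j0L by linarith
      then show ?thesis using b0 by (simp add: divide_right_mono)
    qed
    finally show ?thesis unfolding watermark_def G_def k_def using False by simp
  qed
  have det: "g \<in> {g. wasserstein p (emp_dist m n X) (emp_dist m n (watermark b mv X g)) \<le> bound}"
    if g: "g \<in> Good" for g
  proof -
    have "euclid_dist (mat_row n X i) (mat_row n (watermark b mv X g) i) \<le> bound" if i: "i < m" for i
    proof -
      have "(\<Sum>c<2*n. (X i c - watermark b mv X g i c)^2) \<le> (\<Sum>c<2*n. (real L / real b)^2)"
      proof (intro sum_mono)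
        fix c assume "c \<in> {..<2*n}"
        then have "\<bar>X i c - watermark b mv X g i c\<bar> \<le> real L / real b"
          using entry[OF g i, of c] by (simp add: abs_minus_commute)
        then show "(X i c - watermark b mv X g i c)^2 \<le> (real L / real b)^2"
          using power_mono[OF _ abs_ge_zero, of _ _ 2] by (metis power2_abs)
      qed
      also have "\<dots> = 2 * real n * (real L / real b)^2" by simp
      finally have s: "(\<Sum>c<2*n. (X i c - watermark b mv X g i c)^2) \<le> 2 * real n * (real L / real b)^2" .
      have "euclid_dist (mat_row n X i) (mat_row n (watermark b mv X g) i)
          = sqrt (\<Sum>c<2*n. (X i c - watermark b mv X g i c)^2)"
        unfolding euclid_dist_def mat_row_def by simp
      also have "\<dots> \<le> sqrt (2 * real n * (real L / real b)^2)" using s by simp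
      also have "\<dots> = bound" unfolding bound_def using b0 by (simp add: real_sqrt_mult)
      finally show ?thesis .
    qed
    then show ?thesis using wass_bound[OF assms(1) assms(8)] unfolding bound_def by simp
  qed
  define s where "s = (\<lambda>i k. min (idx i k) (b + 1 - L))"
  define E where "E = (\<lambda>(i,k). {g :: nat \<times> nat \<times> nat \<Rightarrow> bool. \<forall>j\<in>{s i k..<s i k + L}. \<not> g (i,k,j)})"
  define IK where "IK = {0..<m} \<times> {0..<n}"
  have bad: "UNIV - Good \<subseteq> (\<Union>ik\<in>IK. E ik)"
  proof
    fix g assume "g \<in> UNIV - Good"
    then obtain i k where ik: "i < m" "k < n" and
      no: "\<forall>j\<in>{1..b}. g (i,k,j) \<longrightarrow> \<not> \<bar>int j - int (idx i k)\<bar> \<le> int L - 1"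
      unfolding Good_def by auto
    have "g \<in> E (i,k)" unfolding E_def
    proof (clarsimp)
      fix j assume j: "s i k \<le> j" "j < s i k + L" "g (i,k,j)"
      have "j \<in> {1..b}" "\<bar>int j - int (idx i k)\<bar> \<le> int L - 1"
        using j idx[OF ik] L1 bL unfolding s_def by auto
      then show False using no j by blast
    qed
    then show "g \<in> (\<Union>ik\<in>IK. E ik)" using ik by (intro UN_I[of "(i,k)"]) (auto simp: IK_def)
  qed
  have probE: "measure_pmf.prob (green_pmf m n b) (E (i,k)) = (1/2)^L" if ik: "i < m" "k < n" for i k
  proof -
    define A where "A = {0..<m} \<times> {0..<n} \<times> {1..b}"
    define S where "S = (\<lambda>j. (i,k,j)) ` {s i k..<s i k + L}"
    have SA: "S \<subseteq> A" unfolding S_def A_def using ik idx[OF ik] L1 bL unfolding s_def by auto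
    have "E (i,k) = Pi A (\<lambda>x. if x \<in> S then {False} else UNIV)"
      using SA unfolding E_def S_def Pi_def by auto
    then have "measure_pmf.prob (green_pmf m n b) (E (i,k))
        = (\<Prod>x\<in>A. measure_pmf.prob (bernoulli_pmf (1/2)) (if x \<in> S then {False} else UNIV))"
      unfolding green_pmf_def A_def by (simp add: measure_Pi_pmf_Pi)
    also have "\<dots> = (\<Prod>x\<in>A. if x \<in> S then 1/2 else 1)"
      by (intro prod.cong) (auto simp: measure_pmf_single)
    also have "\<dots> = (1/2) ^ card (A \<inter> S)"
      unfolding A_def by (simp add: prod.If_cases)
    also have "card (A \<inter> S) = L" using SA unfolding S_def
      by (simp add: Int_absorb1 card_image inj_on_def)
    finally show ?thesis .
  qed
  have "measure_pmf.prob (green_pmf m n b) (UNIV - Good)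
      \<le> measure_pmf.prob (green_pmf m n b) (\<Union>ik\<in>IK. E ik)"
    using bad by (intro measure_pmf.finite_measure_mono) auto
  also have "\<dots> \<le> (\<Sum>ik\<in>IK. measure_pmf.prob (green_pmf m n b) (E ik))"
    unfolding IK_def by (intro measure_pmf.finite_measure_subadditive_finite) auto
  also have "\<dots> = (\<Sum>ik\<in>IK. (1/2)^L)"
    by (intro sum.cong) (auto simp: IK_def probE)
  also have "\<dots> = real m * real n * (1/2)^L" unfolding IK_def by simp
  also have "\<dots> \<le> \<delta>"
  proof -
    have "real m * real n = r * \<delta>" unfolding r_def using assms(4) by simp
    also have "\<dots> \<le> 2^L * \<delta>" using twoL assms(4) by simp
    finally show ?thesis by (simp add: field_simps power_divide)
  qed
  finally have "measure_pmf.prob (green_pmf m n b) (UNIV - Good) \<le> \<delta>" .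
  then have pG: "1 - \<delta> \<le> measure_pmf.prob (green_pmf m n b) Good"
    using measure_pmf.prob_compl[of "Good" "green_pmf m n b"] by simp
  also have "\<dots> \<le> measure_pmf.prob (green_pmf m n b)
      {g. wasserstein p (emp_dist m n X) (emp_dist m n (watermark b mv X g)) \<le> bound}"
    using det by (intro measure_pmf.finite_measure_mono) auto
  finally show ?thesis unfolding bound_def r_def[symmetric] Lr .
qed

end
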